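(* Let $F$ be a field of characteristic zero, $G$ a finite group, $A$ a $G$-graded PI-algebra (GPI-algebra) over $F$, and $d_1,\dots,d_m$ positive integers; put $d=d_1+\cdots+d_m$. Let $\mathcal{U}(d_1,\dots,d_m;A)$ be the subalgebra of $UT(d_1,\dots,d_m;\mathcal{U}_G(A))$ generated by the generic matrices $\xi_k^{(g)}$, $k\in\mathbb{N}$, $g\in G$, defined as follows: for $1\le r\le s\le m$ and indices $i,j$ with $d_1+\cdots+d_{r-1}+1\le i\le d_1+\cdots+d_r$ and $d_1+\cdots+d_{s-1}+1\le j\le d_1+\cdots+d_s$, the $(i,j)$ entry of $\xi_k^{(g)}$ is $x_{ij,k}^{(g)}+T_G(A)\in\mathcal{U}_G(A)$, where the $x_{ij,k}^{(g)}$ are pairwise distinct free generators of degree $g$; all entries below the diagonal blocks are $0$. Then the graded homomorphism $F\langle X\rangle\to\mathcal{U}(d_1,\dots,d_m;A)$ sending $x_k^{(g)}\mapsto\xi_k^{(g)}$ is surjective with kernel $T_G(UT(d_1,\dots,d_m;A))$; in particular \[\mathcal{U}(d_1,\dots,d_m;A)\cong \frac{F\langle X\rangle}{T_G(UT(d_1,\dots,d_m;A))}.\]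
   Context: All algebras are associative and unitary. $X=\bigcup_{g\in G}X^g$ is a disjoint union of countable sets, $X^g=\{x_1^{(g)},x_2^{(g)},\dots\}$ consisting of variables of degree $g$, and $F\langle X\rangle$ is the free associative algebra on $X$, $G$-graded by declaring a monomial $x_{i_1}\cdots x_{i_k}$ to have degree $\deg(x_{i_1})\cdots\deg(x_{i_k})$. For a $G$-graded algebra $A=\bigoplus_g A^g$, a graded polynomial $f(x_1,\dots,x_t)$ is a graded identity of $A$ if $f(a_1,\dots,a_t)=0$ whenever $a_i\in A^{\deg(x_i)}$; $T_G(A)$ is the ideal of all graded identities, and $\mathcal{U}_G(A)=F\langle X\rangle/T_G(A)$ is the relatively free $G$-graded algebra of $A$ (here taken over a sufficiently large set of graded variables, including the $x_{ij,k}^{(g)}$). A GPI-algebra is a $G$-graded algebra with a nonzero graded identity. $UT(d_1,\dots,d_m;A)$ denotes the algebra of block upper-triangular matrices in $M_{d}(A)$ whose $(r,s)$ block ($r\le s$) is an arbitrary $d_r\times d_s$ matrix over $A$ and whose blocks below the diagonal are zero; it is $G$-graded by letting its degree-$g$ component consist of the matrices all of whose entries lie in $A^g$. *)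

theory Defs
  imports Complex_Main "HOL-Library.Poly_Mapping" "HOL-Library.Function_Algebras" "HOL-Algebra.Group"
begin

(* ---------- Free associative algebra F<V> ----------
   A noncommutative polynomial over 'f in variables 'v is a finitely supported
   function from words (lists of variables) to coefficients. *)
type_synonym ('v, 'f) fpoly = "'v list \<Rightarrow>\<^sub>0 'f"

definition psmul :: "'f::semiring_0 \<Rightarrow> ('v, 'f) fpoly \<Rightarrow> ('v, 'f) fpoly" where
  "psmul c p = (\<Sum>w\<in>Poly_Mapping.keys p. Poly_Mapping.single w (c * Poly_Mapping.lookup p w))"

definition pmul :: "('v, 'f::semiring_0) fpoly \<Rightarrow> ('v, 'f) fpoly \<Rightarrow> ('v, 'f) fpoly" where
  "pmul p q = (\<Sum>u\<in>Poly_Mapping.keys p. \<Sum>w\<in>Poly_Mapping.keys q. Poly_Mapping.single (u @ w) (Poly_Mapping.lookup p u * Poly_Mapping.lookup q w))"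

definition pone :: "('v, 'f::{zero,one}) fpoly" where
  "pone = Poly_Mapping.single [] 1"

definition pvar :: "'v \<Rightarrow> ('v, 'f::{zero,one}) fpoly" where
  "pvar v = Poly_Mapping.single [v] 1"

(* ---------- Evaluation of a polynomial in an algebra, given its operations ----------
   sc = scalar multiplication, mul = multiplication, un = unit; addition / zero
   are those of the type. *)
definition prodl :: "('b \<Rightarrow> 'b \<Rightarrow> 'b) \<Rightarrow> 'b \<Rightarrow> 'b list \<Rightarrow> 'b" where
  "prodl mul un xs = foldr mul xs un"

definition geval :: "('f::zero \<Rightarrow> 'b::comm_monoid_add \<Rightarrow> 'b) \<Rightarrow> ('b \<Rightarrow> 'b \<Rightarrow> 'b) \<Rightarrow> 'b
     \<Rightarrow> ('v \<Rightarrow> 'b) \<Rightarrow> ('v, 'f) fpoly \<Rightarrow> 'b" where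
  "geval sc mul un \<phi> f = (\<Sum>w\<in>Poly_Mapping.keys f. sc (Poly_Mapping.lookup f w) (prodl mul un (map \<phi> w)))"

(* ---------- Graded identities ----------
   deg gives the G-degree of each variable; cmp g is the homogeneous component
   of degree g of the target algebra. *)
definition graded_identity ::
  "('g, 'z) monoid_scheme \<Rightarrow> ('v \<Rightarrow> 'g) \<Rightarrow> ('g \<Rightarrow> 'b set)
   \<Rightarrow> ('f::zero \<Rightarrow> 'b::comm_monoid_add \<Rightarrow> 'b) \<Rightarrow> ('b \<Rightarrow> 'b \<Rightarrow> 'b) \<Rightarrow> 'b
   \<Rightarrow> ('v, 'f) fpoly \<Rightarrow> bool" where
  "graded_identity G deg cmp sc mul un f \<longleftrightarrow>
     (\<forall>\<phi>. (\<forall>v. deg v \<in> carrier G \<longrightarrow> \<phi> v \<in> cmp (deg v)) \<longrightarrow> geval sc mul un \<phi> f = 0)"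

(* F<X>: polynomials in variables x_k^(g) = (g,k) with g \<in> G *)
definition FX :: "('g, 'z) monoid_scheme \<Rightarrow> (('g \<times> 'i), 'f::zero) fpoly set" where
  "FX G = {f. \<forall>w\<in>Poly_Mapping.keys f. \<forall>v\<in>set w. fst v \<in> carrier G}"

definition F_algebra :: "('f::field \<Rightarrow> 'a::ring_1 \<Rightarrow> 'a) \<Rightarrow> bool" where
  "F_algebra s \<longleftrightarrow> Vector_Spaces.vector_space s \<and>
     (\<forall>c x y. s c (x * y) = s c x * y \<and> s c (x * y) = x * s c y)"

definition graded_F_algebra ::
  "('g, 'z) monoid_scheme \<Rightarrow> ('f::field \<Rightarrow> 'a::ring_1 \<Rightarrow> 'a) \<Rightarrow> ('g \<Rightarrow> 'a set) \<Rightarrow> bool" where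
  "graded_F_algebra G s A \<longleftrightarrow> F_algebra s \<and>
     (\<forall>g\<in>carrier G. 0 \<in> A g \<and> (\<forall>x\<in>A g. \<forall>y\<in>A g. x + y \<in> A g) \<and> (\<forall>c. \<forall>x\<in>A g. s c x \<in> A g)) \<and>
     (\<forall>g\<in>carrier G. \<forall>h\<in>carrier G. \<forall>x\<in>A g. \<forall>y\<in>A h. x * y \<in> A (g \<otimes>\<^bsub>G\<^esub> h)) \<and>
     (\<forall>a. \<exists>!c. (\<forall>g. g \<notin> carrier G \<longrightarrow> c g = 0) \<and> (\<forall>g\<in>carrier G. c g \<in> A g) \<and>
              a = (\<Sum>g\<in>carrier G. c g))"

(* ---------- Matrices (0-based, size d, entries outside range are 0) ---------- *)
type_synonym 'b mat = "nat \<Rightarrow> nat \<Rightarrow> 'b"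

definition mat_mul :: "nat \<Rightarrow> ('b \<Rightarrow> 'b \<Rightarrow> 'b::comm_monoid_add) \<Rightarrow> 'b mat \<Rightarrow> 'b mat \<Rightarrow> 'b mat" where
  "mat_mul d mul M N = (\<lambda>i j. if i < d \<and> j < d then \<Sum>l<d. mul (M i l) (N l j) else 0)"

definition mat_one :: "nat \<Rightarrow> 'b \<Rightarrow> 'b::zero mat" where
  "mat_one d un = (\<lambda>i j. if i < d \<and> i = j then un else 0)"

definition mat_smul :: "('f \<Rightarrow> 'b \<Rightarrow> 'b) \<Rightarrow> 'f \<Rightarrow> 'b mat \<Rightarrow> 'b mat" where
  "mat_smul sc c M = (\<lambda>i j. sc c (M i j))"

(* block index (0-based) of row/column i for block sizes ds *)
definition blk :: "nat list \<Rightarrow> nat \<Rightarrow> nat" where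
  "blk ds i = (LEAST r. i < sum_list (take (Suc r) ds))"

(* degree-g component of UT(d_1,...,d_m; A) *)
definition UTcomp :: "nat list \<Rightarrow> ('g \<Rightarrow> 'a::zero set) \<Rightarrow> 'g \<Rightarrow> 'a mat set" where
  "UTcomp ds A g = {M. \<forall>i j. (M i j \<noteq> 0 \<longrightarrow> i < sum_list ds \<and> j < sum_list ds \<and> blk ds i \<le> blk ds j)
                          \<and> M i j \<in> A g}"

(* generic matrices xi_k^(g): entry (i,j) is the variable x_{ij,k}^(g) = (g,(i,j,k)) *)
definition generic :: "nat list \<Rightarrow> 'g \<times> nat \<Rightarrow> (('g \<times> (nat \<times> nat \<times> nat)), 'f::{zero,one}) fpoly mat" where
  "generic ds v = (\<lambda>i j. if i < sum_list ds \<and> j < sum_list ds \<and> blk ds i \<le> blk ds j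
                         then pvar (fst v, (i, j, snd v)) else 0)"

inductive_set gen_subalg :: "('f \<Rightarrow> 'b \<Rightarrow> 'b) \<Rightarrow> ('b \<Rightarrow> 'b \<Rightarrow> 'b) \<Rightarrow> 'b::comm_monoid_add \<Rightarrow> 'b set \<Rightarrow> 'b set"
  for sc mul un S where
  gen: "x \<in> S \<Longrightarrow> x \<in> gen_subalg sc mul un S"
| zero: "0 \<in> gen_subalg sc mul un S"
| unit: "un \<in> gen_subalg sc mul un S"
| smul: "x \<in> gen_subalg sc mul un S \<Longrightarrow> sc c x \<in> gen_subalg sc mul un S"
| add: "x \<in> gen_subalg sc mul un S \<Longrightarrow> y \<in> gen_subalg sc mul un S \<Longrightarrow> x + y \<in> gen_subalg sc mul un S"
| mul: "x \<in> gen_subalg sc mul un S \<Longrightarrow> y \<in> gen_subalg sc mul un S \<Longrightarrow> mul x y \<in> gen_subalg sc mul un S"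

end

theory Submission
  imports Defs
begin

instantiation list :: (type) monoid_add
begin
definition zero_list_def[simp]: "(0::'a list) = []"
definition plus_list_def[simp]: "(xs::'a list) + ys = xs @ ys"
instance by standard auto
end

lemma pm_sum_monomials: "(\<Sum>w\<in>Poly_Mapping.keys p. Poly_Mapping.single w (Poly_Mapping.lookup p w)) = p"
proof (rule poly_mapping_eqI)
  fix k
  show "Poly_Mapping.lookup (\<Sum>w\<in>Poly_Mapping.keys p. Poly_Mapping.single w (Poly_Mapping.lookup p w)) k = Poly_Mapping.lookup p k"
    by (auto simp: lookup_sum lookup_single when_def in_keys_iff)
qed

lemma pmul_eq: "pmul p q = (p * q :: ('v, 'f::semiring_0) fpoly)"
proof -
  have "p * q = (\<Sum>u\<in>Poly_Mapping.keys p. Poly_Mapping.single u (Poly_Mapping.lookup p u)) * (\<Sum>w\<in>Poly_Mapping.keys q. Poly_Mapping.single w (Poly_Mapping.lookup q w))"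
    by (simp add: pm_sum_monomials)
  also have "\<dots> = (\<Sum>u\<in>Poly_Mapping.keys p. \<Sum>w\<in>Poly_Mapping.keys q. Poly_Mapping.single u (Poly_Mapping.lookup p u) * Poly_Mapping.single w (Poly_Mapping.lookup q w))"
    by (rule sum_product)
  also have "\<dots> = pmul p q" by (simp add: pmul_def mult_single)
  finally show ?thesis by simp
qed

lemma psmul_eq: "psmul c p = Poly_Mapping.single [] c * (p :: ('v, 'f::semiring_0) fpoly)"
proof -
  have "Poly_Mapping.single [] c * p = Poly_Mapping.single [] c * (\<Sum>w\<in>Poly_Mapping.keys p. Poly_Mapping.single w (Poly_Mapping.lookup p w))"
    by (simp add: pm_sum_monomials)
  also have "\<dots> = psmul c p" by (simp add: psmul_def sum_distrib_left mult_single)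
  finally show ?thesis by simp
qed

lemma single_comm: "Poly_Mapping.single [] (c::'f::comm_semiring_0) * (p :: ('v, 'f) fpoly) = p * Poly_Mapping.single [] c"
proof -
  have "p * Poly_Mapping.single [] c = (\<Sum>w\<in>Poly_Mapping.keys p. Poly_Mapping.single w (Poly_Mapping.lookup p w)) * Poly_Mapping.single [] c"
    by (simp add: pm_sum_monomials)
  also have "\<dots> = Poly_Mapping.single [] c * (\<Sum>w\<in>Poly_Mapping.keys p. Poly_Mapping.single w (Poly_Mapping.lookup p w))"
    by (simp add: sum_distrib_left sum_distrib_right mult_single mult.commute)
  finally show ?thesis by (simp add: pm_sum_monomials)
qed

lemma pone_eq: "pone = (1 :: ('v, 'f::semiring_1) fpoly)"
  by (simp add: pone_def flip: single_one)


locale evalg =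
  fixes sc :: "'f::field \<Rightarrow> 'b::comm_monoid_add \<Rightarrow> 'b" and mul :: "'b \<Rightarrow> 'b \<Rightarrow> 'b" and un :: 'b
  assumes sc_add_l: "sc (a + b) x = sc a x + sc b x"
    and sc_0_l: "sc 0 x = 0"
    and sc_add_r: "sc a (x + y) = sc a x + sc a y"
    and sc_0_r: "sc a 0 = 0"
    and sc_1: "sc 1 x = x"
    and sc_sc: "sc a (sc b x) = sc (a * b) x"
    and mul_add_l: "mul (x + y) z = mul x z + mul y z"
    and mul_add_r: "mul x (y + z) = mul x y + mul x z"
    and mul_0_l: "mul 0 x = 0"
    and mul_0_r: "mul x 0 = 0"
    and mul_sc_l: "mul (sc a x) y = sc a (mul x y)"
    and mul_sc_r: "mul x (sc a y) = sc a (mul x y)"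
    and mul_assoc: "mul (mul x y) z = mul x (mul y z)"
    and un_l: "mul un (mul x y) = mul x y"
    and un_un: "mul un un = un"
begin

abbreviation P where "P \<phi> w \<equiv> prodl mul un (map \<phi> w)"

lemma P_append: "P \<phi> (u @ w) = mul (P \<phi> u) (P \<phi> w)"
proof (induction u)
  case Nil
  show ?case
  proof (cases w)
    case Nil then show ?thesis by (simp add: prodl_def un_un)
  next
    case (Cons a w') then show ?thesis by (simp add: prodl_def un_l)
  qed
next
  case (Cons a u) then show ?case by (simp add: prodl_def mul_assoc)
qed

lemma sc_sum: "sc c (sum h S) = (\<Sum>x\<in>S. sc c (h x))"
  by (induction S rule: infinite_finite_induct) (auto simp: sc_0_r sc_add_r)

lemma mul_sum_l: "mul (sum h S) y = (\<Sum>x\<in>S. mul (h x) y)"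
  by (induction S rule: infinite_finite_induct) (auto simp: mul_0_l mul_add_l)

lemma mul_sum_r: "mul y (sum h S) = (\<Sum>x\<in>S. mul y (h x))"
  by (induction S rule: infinite_finite_induct) (auto simp: mul_0_r mul_add_r)

lemma geval_superset:
  assumes "finite S" "Poly_Mapping.keys f \<subseteq> S"
  shows "geval sc mul un \<phi> f = (\<Sum>w\<in>S. sc (Poly_Mapping.lookup f w) (P \<phi> w))"
  unfolding geval_def
  by (rule sum.mono_neutral_left) (use assms in \<open>auto simp: in_keys_iff sc_0_l\<close>)

lemma geval_zero: "geval sc mul un \<phi> 0 = 0"
  by (simp add: geval_def)

lemma geval_add: "geval sc mul un \<phi> (f + g) = geval sc mul un \<phi> f + geval sc mul un \<phi> g"
proof -
  let ?S = "Poly_Mapping.keys f \<union> Poly_Mapping.keys g"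
  have "geval sc mul un \<phi> (f + g) = (\<Sum>w\<in>?S. sc (Poly_Mapping.lookup (f+g) w) (P \<phi> w))"
    by (rule geval_superset) (auto dest: keys_add[THEN subsetD])
  also have "\<dots> = (\<Sum>w\<in>?S. sc (Poly_Mapping.lookup f w) (P \<phi> w)) + (\<Sum>w\<in>?S. sc (Poly_Mapping.lookup g w) (P \<phi> w))"
    by (simp add: lookup_add sc_add_l sum.distrib)
  also have "\<dots> = geval sc mul un \<phi> f + geval sc mul un \<phi> g"
    using geval_superset[of ?S f \<phi>] geval_superset[of ?S g \<phi>] by simp
  finally show ?thesis .
qed

lemma geval_sum: "geval sc mul un \<phi> (sum h I) = (\<Sum>i\<in>I. geval sc mul un \<phi> (h i))"
  by (induction I rule: infinite_finite_induct) (auto simp: geval_zero geval_add)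

lemma geval_single: "geval sc mul un \<phi> (Poly_Mapping.single w c) = sc c (P \<phi> w)"
  by (simp add: geval_def sc_0_l)

lemma geval_psmul: "geval sc mul un \<phi> (psmul c f) = sc c (geval sc mul un \<phi> f)"
proof -
  have "geval sc mul un \<phi> (psmul c f) = (\<Sum>w\<in>Poly_Mapping.keys f. sc (c * Poly_Mapping.lookup f w) (P \<phi> w))"
    unfolding psmul_def geval_sum geval_single ..
  also have "\<dots> = sc c (geval sc mul un \<phi> f)"
    unfolding geval_def sc_sum sc_sc ..
  finally show ?thesis .
qed

lemma geval_pmul: "geval sc mul un \<phi> (pmul f g) = mul (geval sc mul un \<phi> f) (geval sc mul un \<phi> g)"
proof -
  have "geval sc mul un \<phi> (pmul f g) = (\<Sum>u\<in>Poly_Mapping.keys f. \<Sum>w\<in>Poly_Mapping.keys g.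
      sc (Poly_Mapping.lookup f u * Poly_Mapping.lookup g w) (P \<phi> (u @ w)))"
    unfolding pmul_def geval_sum geval_single ..
  also have "\<dots> = mul (geval sc mul un \<phi> f) (geval sc mul un \<phi> g)"
    unfolding geval_def mul_sum_l mul_sum_r mul_sc_l mul_sc_r sc_sc P_append
    by (simp add: sc_sum sc_sc mult.commute) (rule sum.swap)
  finally show ?thesis .
qed

lemma geval_pone: "geval sc mul un \<phi> pone = un"
  by (simp add: pone_def geval_single sc_1 prodl_def)

lemma geval_pvar: "geval sc mul un \<phi> (pvar v) = mul (\<phi> v) un"
  by (simp add: pvar_def geval_single sc_1 prodl_def)

end

lemma geval_hom:
  assumes "\<And>x y. H (x + y) = H x + H y" "H 0 = 0" "\<And>c x. H (sc1 c x) = sc2 c (H x)"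
    "\<And>x y. H (mul1 x y) = mul2 (H x) (H y)" "H un1 = un2"
  shows "H (geval sc1 mul1 un1 \<phi> f) = geval sc2 mul2 un2 (H \<circ> \<phi>) f"
proof -
  have hs: "H (sum h S) = (\<Sum>x\<in>S. H (h x))" for h and S :: "'x set"
    by (induction S rule: infinite_finite_induct) (auto simp: assms)
  have hp: "H (prodl mul1 un1 (map \<phi> w)) = prodl mul2 un2 (map (H \<circ> \<phi>) w)" for w
    by (induction w) (auto simp: prodl_def assms)
  show ?thesis by (simp add: geval_def hs assms hp)
qed

lemma geval_cong:
  assumes "\<And>w v. w \<in> Poly_Mapping.keys f \<Longrightarrow> v \<in> set w \<Longrightarrow> \<phi> v = \<phi>' v"
  shows "geval sc mul un \<phi> f = geval sc mul un \<phi>' f"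
  unfolding geval_def
  by (rule sum.cong[OF refl]) (metis assms map_eq_conv)


lemma evalg_A:
  assumes "F_algebra (s :: 'f::field \<Rightarrow> 'a::ring_1 \<Rightarrow> 'a)"
  shows "evalg s (*) 1"
proof -
  from assms have vs: "Vector_Spaces.vector_space s"
    unfolding F_algebra_def by blast
  from assms have m: "\<forall>c x y. s c (x * y) = s c x * y \<and> s c (x * y) = x * s c y"
    unfolding F_algebra_def by blast
  have m1: "\<And>c x y. s c x * y = s c (x * y)" and m2: "\<And>c x y. x * s c y = s c (x * y)"
    using m by metis+
  interpret vector_space s by fact
  show ?thesis
  proof
    fix a b :: 'f and x y z :: 'a
    show "s (a + b) x = s a x + s b x" by (rule scale_left_distrib)
    show "s 0 x = 0" by simp
    show "s a (x + y) = s a x + s a y" by (rule scale_right_distrib)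
    show "s a 0 = 0" by simp
    show "s 1 x = x" by simp
    show "s a (s b x) = s (a * b) x" by simp
    show "(x + y) * z = x * z + y * z" by (rule distrib_right)
    show "x * (y + z) = x * y + x * z" by (rule distrib_left)
    show "0 * x = 0" by simp
    show "x * 0 = 0" by simp
    show "s a x * y = s a (x * y)" by (rule m1)
    show "x * s a y = s a (x * y)" by (rule m2)
    show "x * y * z = x * (y * z)" by (rule mult.assoc)
    show "1 * (x * y) = x * y" by simp
    show "1 * 1 = (1::'a)" by simp
  qed
qed

definition supp :: "nat \<Rightarrow> 'b::zero mat \<Rightarrow> bool" where
  "supp d M \<longleftrightarrow> (\<forall>i j. \<not> (i < d \<and> j < d) \<longrightarrow> M i j = 0)"

lemma supp_mat_mul: "supp d (mat_mul d mul M N)"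
  by (simp add: supp_def mat_mul_def)

lemma supp_mat_one: "supp d (mat_one d un)"
  by (simp add: supp_def mat_one_def)

lemma mat_one_left:
  assumes "supp d (M :: 'r::semiring_1 mat)"
  shows "mat_mul d (*) (mat_one d 1) M = M"
proof (intro ext)
  fix i j
  show "mat_mul d (*) (mat_one d 1) M i j = M i j"
  proof (cases "i < d \<and> j < d")
    case True
    then have "(\<Sum>l<d. (if i < d \<and> i = l then 1 else 0) * M l j) = (\<Sum>l<d. if l = i then M l j else 0)"
      by (intro sum.cong) auto
    also have "\<dots> = M i j" using True by simp
    finally have "(\<Sum>l<d. (if i < d \<and> i = l then 1 else 0) * M l j) = M i j" .
    with True show ?thesis by (simp add: mat_mul_def mat_one_def)
  next
    case False then show ?thesis using assms by (auto simp: mat_mul_def supp_def)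
  qed
qed

lemma mat_one_right:
  assumes "supp d (M :: 'r::semiring_1 mat)"
  shows "mat_mul d (*) M (mat_one d 1) = M"
proof (intro ext)
  fix i j
  show "mat_mul d (*) M (mat_one d 1) i j = M i j"
  proof (cases "i < d \<and> j < d")
    case True
    then have "(\<Sum>l<d. M i l * (if l < d \<and> l = j then 1 else 0)) = (\<Sum>l<d. if l = j then M i l else 0)"
      by (intro sum.cong) auto
    also have "\<dots> = M i j" using True by simp
    finally have "(\<Sum>l<d. M i l * (if l < d \<and> l = j then 1 else 0)) = M i j" .
    with True show ?thesis by (simp add: mat_mul_def mat_one_def)
  next
    case False then show ?thesis using assms by (auto simp: mat_mul_def supp_def)
  qed
qed

lemma mat_mul_assoc:
  "mat_mul d (*) (mat_mul d (*) M N) P = mat_mul d (*) M (mat_mul d (*) N (P :: 'r::semiring_0 mat))"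
proof (intro ext)
  fix i j
  show "mat_mul d (*) (mat_mul d (*) M N) P i j = mat_mul d (*) M (mat_mul d (*) N P) i j"
  proof (cases "i < d \<and> j < d")
    case True
    have "(\<Sum>l<d. (\<Sum>m<d. M i m * N m l) * P l j) = (\<Sum>l<d. \<Sum>m<d. M i m * N m l * P l j)"
      by (simp add: sum_distrib_right)
    also have "\<dots> = (\<Sum>m<d. \<Sum>l<d. M i m * N m l * P l j)" by (rule sum.swap)
    also have "\<dots> = (\<Sum>m<d. M i m * (\<Sum>l<d. N m l * P l j))"
      by (simp add: sum_distrib_left mult.assoc)
    moreover have "(\<Sum>x<d. (if x < d then \<Sum>l<d. M i l * N l x else 0) * P x j) = (\<Sum>l<d. (\<Sum>m<d. M i m * N m l) * P l j)"
      by (intro sum.cong) auto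
    moreover have "(\<Sum>x<d. M i x * (if x < d then \<Sum>l<d. N x l * P l j else 0)) = (\<Sum>m<d. M i m * (\<Sum>l<d. N m l * P l j))"
      by (intro sum.cong) auto
    ultimately show ?thesis using True by (simp add: mat_mul_def)
  next
    case False then show ?thesis by (auto simp: mat_mul_def)
  qed
qed

lemma evalg_mat:
  fixes \<kappa> :: "'f::field \<Rightarrow> 'r::ring_1"
  assumes k_add: "\<And>a b. \<kappa> (a + b) = \<kappa> a + \<kappa> b" and k0: "\<kappa> 0 = 0" and k1: "\<kappa> 1 = 1"
    and k_mul: "\<And>a b. \<kappa> (a * b) = \<kappa> a * \<kappa> b" and k_comm: "\<And>a x. \<kappa> a * x = x * \<kappa> a"
  shows "evalg (mat_smul (\<lambda>c x. \<kappa> c * x)) (mat_mul d (*)) (mat_one d (1::'r))"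
proof
  fix a b :: 'f and x y z :: "'r mat"
  show "mat_smul (\<lambda>c x. \<kappa> c * x) (a + b) x = mat_smul (\<lambda>c x. \<kappa> c * x) a x + mat_smul (\<lambda>c x. \<kappa> c * x) b x"
    by (simp add: mat_smul_def k_add distrib_right fun_eq_iff)
  show "mat_smul (\<lambda>c x. \<kappa> c * x) 0 x = 0"
    by (simp add: mat_smul_def k0 fun_eq_iff)
  show "mat_smul (\<lambda>c x. \<kappa> c * x) a (x + y) = mat_smul (\<lambda>c x. \<kappa> c * x) a x + mat_smul (\<lambda>c x. \<kappa> c * x) a y"
    by (simp add: mat_smul_def distrib_left fun_eq_iff)
  show "mat_smul (\<lambda>c x. \<kappa> c * x) a 0 = 0"
    by (simp add: mat_smul_def fun_eq_iff)
  show "mat_smul (\<lambda>c x. \<kappa> c * x) 1 x = x"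
    by (simp add: mat_smul_def k1 fun_eq_iff)
  show "mat_smul (\<lambda>c x. \<kappa> c * x) a (mat_smul (\<lambda>c x. \<kappa> c * x) b x) = mat_smul (\<lambda>c x. \<kappa> c * x) (a * b) x"
    by (simp add: mat_smul_def k_mul mult.assoc fun_eq_iff)
  show "mat_mul d (*) (x + y) z = mat_mul d (*) x z + mat_mul d (*) y z"
    by (simp add: mat_mul_def distrib_right sum.distrib fun_eq_iff)
  show "mat_mul d (*) x (y + z) = mat_mul d (*) x y + mat_mul d (*) x z"
    by (simp add: mat_mul_def distrib_left sum.distrib fun_eq_iff)
  show "mat_mul d (*) 0 x = 0"
    by (simp add: mat_mul_def fun_eq_iff)
  show "mat_mul d (*) x 0 = 0"
    by (simp add: mat_mul_def fun_eq_iff)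
  show "mat_mul d (*) (mat_smul (\<lambda>c x. \<kappa> c * x) a x) y = mat_smul (\<lambda>c x. \<kappa> c * x) a (mat_mul d (*) x y)"
    by (simp add: mat_mul_def mat_smul_def sum_distrib_left mult.assoc fun_eq_iff)
  have "x i l * (\<kappa> a * y l j) = \<kappa> a * (x i l * y l j)" for i l j
    by (metis k_comm mult.assoc)
  then show "mat_mul d (*) x (mat_smul (\<lambda>c x. \<kappa> c * x) a y) = mat_smul (\<lambda>c x. \<kappa> c * x) a (mat_mul d (*) x y)"
    by (simp add: mat_mul_def mat_smul_def sum_distrib_left fun_eq_iff)
  show "mat_mul d (*) (mat_mul d (*) x y) z = mat_mul d (*) x (mat_mul d (*) y z)"
    by (rule mat_mul_assoc)
  show "mat_mul d (*) (mat_one d 1) (mat_mul d (*) x y) = mat_mul d (*) x y"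
    by (rule mat_one_left[OF supp_mat_mul])
  show "mat_mul d (*) (mat_one d 1) (mat_one d 1) = (mat_one d 1 :: 'r mat)"
    by (rule mat_one_left[OF supp_mat_one])
qed


lemma EG:
  "evalg (mat_smul psmul) (mat_mul d pmul) (mat_one d pone :: ('v, 'f::field) fpoly mat)"
proof -
  have e1: "psmul = (\<lambda>c x. Poly_Mapping.single [] c * (x :: ('v, 'f) fpoly))"
    by (simp add: fun_eq_iff psmul_eq)
  have e2: "pmul = ((*) :: ('v, 'f) fpoly \<Rightarrow> _)"
    by (simp add: fun_eq_iff pmul_eq)
  show ?thesis unfolding e1 e2 pone_eq
  proof (rule evalg_mat)
    show "Poly_Mapping.single [] (a + b) = Poly_Mapping.single [] a + Poly_Mapping.single [] b" for a b :: 'f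
      by (rule single_add)
    show "Poly_Mapping.single [] (0::'f) = (0 :: ('v, 'f) fpoly)" by simp
    show "Poly_Mapping.single [] (1::'f) = (1 :: ('v, 'f) fpoly)" using pone_eq by (simp add: pone_def)
    show "Poly_Mapping.single [] (a * b) = Poly_Mapping.single [] a * (Poly_Mapping.single [] b :: ('v, 'f) fpoly)" for a b :: 'f
      by (simp add: mult_single)
    show "Poly_Mapping.single [] a * x = x * Poly_Mapping.single [] a" for a :: 'f and x :: "('v, 'f) fpoly"
      by (rule single_comm)
  qed
qed

lemma supp_generic: "supp (sum_list ds) (generic ds v)"
  by (simp add: supp_def generic_def)

lemma generic_unit:
  "mat_mul (sum_list ds) pmul (generic ds v) (mat_one (sum_list ds) pone) = (generic ds v :: (_, 'f::field) fpoly mat)"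
proof -
  have e2: "pmul = ((*) :: (_, 'f) fpoly \<Rightarrow> _)"
    by (simp add: fun_eq_iff pmul_eq)
  show ?thesis unfolding e2 pone_eq by (rule mat_one_right[OF supp_generic])
qed

lemma sc_one_mat: "mat_smul psmul 1 M = (M :: ('v, 'f::field) fpoly mat)"
  by (rule evalg.sc_1[OF EG])

lemma FX_add: "f \<in> FX G \<Longrightarrow> g \<in> FX G \<Longrightarrow> f + g \<in> FX G"
  unfolding FX_def by (auto dest!: keys_add[THEN subsetD])

lemma keys_sum_single:
  assumes "w \<in> Poly_Mapping.keys (\<Sum>u\<in>U. Poly_Mapping.single (h u) (c u))"
  shows "\<exists>u\<in>U. w = h u"
proof -
  from keys_sum[THEN subsetD, OF assms] obtain u where "u \<in> U" "w \<in> Poly_Mapping.keys (Poly_Mapping.single (h u) (c u))"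
    by blast
  then show ?thesis by (auto split: if_splits)
qed

lemma FX_psmul:
  assumes "f \<in> FX G" shows "psmul c f \<in> FX G"
  unfolding FX_def
proof (intro CollectI ballI)
  fix w v assume w: "w \<in> Poly_Mapping.keys (psmul c f)" and "v \<in> set w"
  have "\<exists>u\<in>Poly_Mapping.keys f. w = u"
    by (rule keys_sum_single[where h="\<lambda>u. u"]) (use w in \<open>simp add: psmul_def\<close>)
  with \<open>v \<in> set w\<close> show "fst v \<in> carrier G" using assms by (auto simp: FX_def)
qed

lemma FX_pmul:
  assumes "f \<in> FX G" "g \<in> FX G" shows "pmul f g \<in> FX G"
  unfolding FX_def
proof (intro CollectI ballI)
  fix w v assume w: "w \<in> Poly_Mapping.keys (pmul f g)" and v: "v \<in> set w"
  from keys_sum[THEN subsetD, OF w[unfolded pmul_def]] obtain u where u: "u \<in> Poly_Mapping.keys f"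
    and w2: "w \<in> Poly_Mapping.keys (\<Sum>x\<in>Poly_Mapping.keys g. Poly_Mapping.single (u @ x) (Poly_Mapping.lookup f u * Poly_Mapping.lookup g x))"
    by blast
  from w2 have "\<exists>x\<in>Poly_Mapping.keys g. w = u @ x"
    by (rule keys_sum_single[where h="\<lambda>x. u @ x"])
  then obtain x where x: "x \<in> Poly_Mapping.keys g" "w = u @ x" by blast
  then show "fst v \<in> carrier G" using assms u v by (auto simp: FX_def)
qed

lemma FX_pone: "pone \<in> FX G"
  by (simp add: FX_def pone_def)

lemma FX_zero: "0 \<in> FX G"
  by (simp add: FX_def)

lemma FX_pvar: "fst v \<in> carrier G \<Longrightarrow> pvar v \<in> FX G"
  by (simp add: FX_def pvar_def)

lemma gen_subalg_sum:
  "(\<And>k. k \<in> K \<Longrightarrow> h k \<in> gen_subalg sc mul un S) \<Longrightarrow> sum h K \<in> gen_subalg sc mul un S"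
proof (induction K rule: infinite_finite_induct)
  case (insert x F)
  then show ?case by (simp add: gen_subalg.add)
qed (simp_all add: gen_subalg.zero)

lemma gen_subalg_prodl:
  "(\<And>v. v \<in> set w \<Longrightarrow> \<phi> v \<in> S) \<Longrightarrow> prodl mul un (map \<phi> w) \<in> gen_subalg sc mul un S"
proof (induction w)
  case Nil then show ?case by (simp add: prodl_def gen_subalg.unit)
next
  case (Cons a w)
  have "\<phi> a \<in> S" using Cons.prems by simp
  moreover have "prodl mul un (map \<phi> w) \<in> gen_subalg sc mul un S" using Cons by simp
  ultimately have "mul (\<phi> a) (prodl mul un (map \<phi> w)) \<in> gen_subalg sc mul un S"
    by (rule gen_subalg.mul[OF gen_subalg.gen])
  then show ?case by (simp add: prodl_def)
qed

lemma part1: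
  "(\<lambda>f. geval (mat_smul psmul) (mat_mul (sum_list ds) pmul) (mat_one (sum_list ds) pone) (generic ds) f)
        ` (FX G :: ('g \<times> nat, 'f::field) fpoly set)
     = gen_subalg (mat_smul psmul) (mat_mul (sum_list ds) pmul) (mat_one (sum_list ds) pone)
         (generic ds ` {v. fst v \<in> carrier G})"
  (is "?ev ` _ = ?S")
proof
  show "?ev ` FX G \<subseteq> ?S"
  proof
    fix x assume "x \<in> ?ev ` FX G"
    then obtain f where f: "f \<in> FX G" and x: "x = ?ev f" by blast
    show "x \<in> ?S" unfolding x geval_def
    proof (rule gen_subalg_sum)
      fix w assume w: "w \<in> Poly_Mapping.keys f"
      show "mat_smul psmul (Poly_Mapping.lookup f w) (prodl (mat_mul (sum_list ds) pmul) (mat_one (sum_list ds) pone) (map (generic ds) w)) \<in> ?S"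
      proof -
        have "\<And>v. v \<in> set w \<Longrightarrow> generic ds v \<in> generic ds ` {v. fst v \<in> carrier G}"
          using f w by (auto simp: FX_def)
        then have "prodl (mat_mul (sum_list ds) pmul) (mat_one (sum_list ds) pone) (map (generic ds) w) \<in> ?S"
          by (rule gen_subalg_prodl)
        then show ?thesis by (rule gen_subalg.smul)
      qed
    qed
  qed
next
  show "?S \<subseteq> ?ev ` FX G"
  proof
    fix x assume "x \<in> ?S"
    then show "x \<in> ?ev ` FX G"
    proof (induction rule: gen_subalg.induct)
      case (gen x)
      then obtain v where v: "fst v \<in> carrier G" and x: "x = generic ds v" by blast
      have "?ev (pvar v) = x"
        unfolding evalg.geval_pvar[OF EG] x generic_unit ..
      then show ?case using FX_pvar[OF v] by (rule rev_image_eqI[rotated, OF sym])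
    next
      case zero
      have "?ev 0 = 0" by (rule evalg.geval_zero[OF EG])
      then show ?case using FX_zero by (rule rev_image_eqI[rotated, OF sym])
    next
      case unit
      have "?ev pone = mat_one (sum_list ds) pone" by (rule evalg.geval_pone[OF EG])
      then show ?case using FX_pone by (rule rev_image_eqI[rotated, OF sym])
    next
      case (smul x c)
      then obtain f where f: "f \<in> FX G" and x: "x = ?ev f" by blast
      have "?ev (psmul c f) = mat_smul psmul c x" unfolding x by (rule evalg.geval_psmul[OF EG])
      then show ?case using FX_psmul[OF f] by (rule rev_image_eqI[rotated, OF sym])
    next
      case (add x y)
      then obtain f g where f: "f \<in> FX G" "x = ?ev f" and g: "g \<in> FX G" "y = ?ev g" by blast
      have "?ev (f + g) = x + y" unfolding f g by (rule evalg.geval_add[OF EG])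
      then show ?case using FX_add[OF f(1) g(1)] by (rule rev_image_eqI[rotated, OF sym])
    next
      case (mul x y)
      then obtain f g where f: "f \<in> FX G" "x = ?ev f" and g: "g \<in> FX G" "y = ?ev g" by blast
      have "?ev (pmul f g) = mat_mul (sum_list ds) pmul x y" unfolding f g by (rule evalg.geval_pmul[OF EG])
      then show ?case using FX_pmul[OF f(1) g(1)] by (rule rev_image_eqI[rotated, OF sym])
    qed
  qed
qed


lemma part2:
  fixes G :: "('g, 'z) monoid_scheme" and s :: "'f::field \<Rightarrow> 'a::ring_1 \<Rightarrow> 'a"
    and A :: "'g \<Rightarrow> 'a set" and ds :: "nat list"
  assumes GA: "graded_F_algebra G s A" and f: "f \<in> (FX G :: ('g \<times> nat, 'f) fpoly set)"
  shows "(\<forall>i j. graded_identity G fst A s (*) 1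
          (geval (mat_smul psmul) (mat_mul (sum_list ds) pmul) (mat_one (sum_list ds) pone) (generic ds) f i j))
       \<longleftrightarrow> graded_identity G fst (UTcomp ds A) (mat_smul s) (mat_mul (sum_list ds) (*)) (mat_one (sum_list ds) 1) f"
proof -
  let ?d = "sum_list ds"
  let ?gen = "geval (mat_smul psmul) (mat_mul ?d pmul) (mat_one ?d pone) (generic ds) f"
  let ?UT = "geval (mat_smul s) (mat_mul ?d (*)) (mat_one ?d 1)"
  have EA: "evalg s (*) (1::'a)"
    using GA by (intro evalg_A) (simp add: graded_F_algebra_def)
  have z: "\<And>g. g \<in> carrier G \<Longrightarrow> 0 \<in> A g"
    using GA by (simp add: graded_F_algebra_def)
  define \<Phi> where "\<Phi> \<psi> M = (\<lambda>i j. geval s (*) 1 \<psi> (M i j))"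
    for \<psi> :: "'g \<times> nat \<times> nat \<times> nat \<Rightarrow> 'a" and M :: "('g \<times> nat \<times> nat \<times> nat, 'f) fpoly mat"
  have K: "\<Phi> \<psi> ?gen = ?UT (\<Phi> \<psi> \<circ> generic ds) f" for \<psi>
  proof (rule geval_hom)
    show "\<Phi> \<psi> (x + y) = \<Phi> \<psi> x + \<Phi> \<psi> y" for x y
      by (simp add: \<Phi>_def fun_eq_iff evalg.geval_add[OF EA])
    show "\<Phi> \<psi> 0 = 0"
      by (simp add: \<Phi>_def fun_eq_iff evalg.geval_zero[OF EA])
    show "\<Phi> \<psi> (mat_smul psmul c x) = mat_smul s c (\<Phi> \<psi> x)" for c x
      by (simp add: \<Phi>_def fun_eq_iff mat_smul_def evalg.geval_psmul[OF EA])
    show "\<Phi> \<psi> (mat_mul ?d pmul x y) = mat_mul ?d (*) (\<Phi> \<psi> x) (\<Phi> \<psi> y)" for x y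
      by (simp add: \<Phi>_def fun_eq_iff mat_mul_def evalg.geval_sum[OF EA] evalg.geval_pmul[OF EA]
          evalg.geval_zero[OF EA])
    show "\<Phi> \<psi> (mat_one ?d pone) = mat_one ?d 1"
      by (simp add: \<Phi>_def fun_eq_iff mat_one_def evalg.geval_pone[OF EA] evalg.geval_zero[OF EA])
  qed
  have Gv: "(\<Phi> \<psi> \<circ> generic ds) v = (\<lambda>i j. if i < ?d \<and> j < ?d \<and> blk ds i \<le> blk ds j
              then \<psi> (fst v, (i, j, snd v)) else 0)" for \<psi> v
    by (simp add: \<Phi>_def generic_def fun_eq_iff evalg.geval_pvar[OF EA] evalg.geval_zero[OF EA])
  show ?thesis
  proof
    assume H: "\<forall>i j. graded_identity G fst A s (*) 1 (?gen i j)"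
    show "graded_identity G fst (UTcomp ds A) (mat_smul s) (mat_mul ?d (*)) (mat_one ?d 1) f"
      unfolding graded_identity_def
    proof (intro allI impI)
      fix \<phi> :: "'g \<times> nat \<Rightarrow> 'a mat"
      assume h\<phi>: "\<forall>v. fst v \<in> carrier G \<longrightarrow> \<phi> v \<in> UTcomp ds A (fst v)"
      define \<psi> where "\<psi> v = \<phi> (fst v, snd (snd (snd v))) (fst (snd v)) (fst (snd (snd v)))"
        for v :: "'g \<times> nat \<times> nat \<times> nat"
      have h\<psi>: "\<forall>v. fst v \<in> carrier G \<longrightarrow> \<psi> v \<in> A (fst v)"
        using h\<phi> by (auto simp: \<psi>_def UTcomp_def)
      have "\<Phi> \<psi> ?gen = 0"
        using H h\<psi> by (simp add: \<Phi>_def fun_eq_iff graded_identity_def)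
      have "?UT \<phi> f = ?UT (\<Phi> \<psi> \<circ> generic ds) f"
      proof (rule geval_cong)
        fix w v assume "w \<in> Poly_Mapping.keys f" "v \<in> set w"
        then have "fst v \<in> carrier G" using f by (auto simp: FX_def)
        then have U: "\<phi> v \<in> UTcomp ds A (fst v)" using h\<phi> by blast
        show "\<phi> v = (\<Phi> \<psi> \<circ> generic ds) v"
          unfolding Gv
        proof (intro ext)
          fix i j
          show "\<phi> v i j = (if i < ?d \<and> j < ?d \<and> blk ds i \<le> blk ds j then \<psi> (fst v, i, j, snd v) else 0)"
            using U by (auto simp: \<psi>_def UTcomp_def)
        qed
      qed
      also have "\<dots> = 0" using K \<open>\<Phi> \<psi> ?gen = 0\<close> by simp
      finally show "?UT \<phi> f = 0" .
    qed
  next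
    assume U: "graded_identity G fst (UTcomp ds A) (mat_smul s) (mat_mul ?d (*)) (mat_one ?d 1) f"
    show "\<forall>i j. graded_identity G fst A s (*) 1 (?gen i j)"
    proof (intro allI)
      fix i j
      show "graded_identity G fst A s (*) 1 (?gen i j)"
        unfolding graded_identity_def
      proof (intro allI impI)
        fix \<psi> :: "'g \<times> nat \<times> nat \<times> nat \<Rightarrow> 'a"
        assume h\<psi>: "\<forall>v. fst v \<in> carrier G \<longrightarrow> \<psi> v \<in> A (fst v)"
        have "\<forall>v. fst v \<in> carrier G \<longrightarrow> (\<Phi> \<psi> \<circ> generic ds) v \<in> UTcomp ds A (fst v)"
          using h\<psi> z unfolding Gv by (auto simp: UTcomp_def)
        then have "?UT (\<Phi> \<psi> \<circ> generic ds) f = 0"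
          using U unfolding graded_identity_def by blast
        then have "\<Phi> \<psi> ?gen = 0" using K by simp
        then show "geval s (*) 1 \<psi> (?gen i j) = 0"
          by (simp add: \<Phi>_def fun_eq_iff)
      qed
    qed
  qed
qed


theorem lemma5p1:
  fixes G :: "('g, 'z) monoid_scheme"
    and s :: "'f::field_char_0 \<Rightarrow> 'a::ring_1 \<Rightarrow> 'a"
    and A :: "'g \<Rightarrow> 'a set"
    and ds :: "nat list"
  assumes "group G" and "finite (carrier G)"
    and "graded_F_algebra G s A"
    and "\<exists>f\<in>FX G. f \<noteq> (0 :: ('g \<times> nat, 'f) fpoly) \<and> graded_identity G fst A s (*) 1 f"
    and "\<forall>k\<in>set ds. 0 < k"
  shows
    "((\<lambda>f. geval (mat_smul psmul) (mat_mul (sum_list ds) pmul) (mat_one (sum_list ds) pone) (generic ds) f)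
        ` (FX G :: ('g \<times> nat, 'f) fpoly set)
     = gen_subalg (mat_smul psmul) (mat_mul (sum_list ds) pmul) (mat_one (sum_list ds) pone)
         (generic ds ` {v. fst v \<in> carrier G}))
     \<and> (\<forall>f\<in>(FX G :: ('g \<times> nat, 'f) fpoly set).
       (\<forall>i j. graded_identity G fst A s (*) 1
          (geval (mat_smul psmul) (mat_mul (sum_list ds) pmul) (mat_one (sum_list ds) pone) (generic ds) f i j))
       \<longleftrightarrow> graded_identity G fst (UTcomp ds A) (mat_smul s) (mat_mul (sum_list ds) (*)) (mat_one (sum_list ds) 1) f)"
  using part1 part2[OF assms(3)] by blast

end
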